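(* Let $G$ be a CDF on $[\underline{\theta},\overline{\theta}]$ and $\phi_d>0$, and let $\tau$ be a weak-highest equilibrium threshold, i.e. $\tau-\phi_d=E_G[s\mid s\le\tau]$ and $\tau'-\phi_d\ge E_G[s\mid s\le\tau']$ for all $\tau'>\tau$. Then for any $\tau_a,\tau_b$ with $\tau\le\tau_a\le\tau_b$, $\int_{\underline{\theta}}^{\tau_b}G(s)\,ds\le e^{(\tau_b-\tau_a)/\phi_d}\int_{\underline{\theta}}^{\tau_a}G(s)\,ds$, with equality if and only if $\tau'-\phi_d=E_G[s\mid s\le\tau']$ for all $\tau'\in[\tau_a,\tau_b]$.
   Context: $\underline{\theta}<\overline{\theta}$ are real numbers with $\underline{\theta}\ge0$; $G$ is the distribution of scores $s\in[\underline{\theta},\overline{\theta}]$ and $\phi_d$ is a disclosure fee. *)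

theory Defs
  imports "HOL-Probability.Probability"
begin

definition cond_exp_le :: "real measure \<Rightarrow> real \<Rightarrow> real" where
  "cond_exp_le M t = (LINT s:{..t}|M. s) / measure M {..t}"

end

theory Submission
  imports Defs
begin

lemma setup_facts:
  fixes M :: "real measure" and \<theta>l \<theta>h :: real
  assumes "0 \<le> \<theta>l" and "\<theta>l < \<theta>h"
    and rd: "real_distribution M" and m1: "measure M {\<theta>l..\<theta>h} = 1"
  shows "\<And>t. t \<ge> \<theta>l \<Longrightarrow> (LINT s:{..t}|M. s) = t * cdf M t - integral {\<theta>l..t} (cdf M)"
    and "\<And>t. t < \<theta>l \<Longrightarrow> cdf M t = 0"
proof -
  interpret real_distribution M by fact
  define F where "F = cdf M"
  have AE: "AE s in M. s \<in> {\<theta>l..\<theta>h}"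
    using AE_in_set_eq_1[of "{\<theta>l..\<theta>h}"] m1 by simp
  show F0: "cdf M t = 0" if "t < \<theta>l" for t
  proof -
    have "cdf M t \<le> measure M (space M - {\<theta>l..\<theta>h})"
      unfolding cdf_def2 using that by (intro finite_measure_mono) auto
    also have "\<dots> = 0" using prob_compl[of "{\<theta>l..\<theta>h}"] m1 by simp
    finally show ?thesis using cdf_nonneg[of t] by linarith
  qed
  have Fmono: "x \<le> y \<Longrightarrow> F x \<le> F y" for x y unfolding F_def by (rule cdf_nondecreasing)
  have F01: "0 \<le> F x" "F x \<le> 1" for x unfolding F_def using cdf_nonneg cdf_bounded_prob by auto
  have Fint: "F integrable_on {a..b}" for a b
    by (rule integrable_on_mono_on) (auto simp: mono_on_def Fmono)
  have Idiff: "integral {\<theta>l..w} F - integral {\<theta>l..u} F = integral {u..w} F" if "\<theta>l \<le> u" "u \<le> w" for u w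
    using Henstock_Kurzweil_Integration.integral_combine[OF that Fint[of \<theta>l w]] by simp
  have Ibnd: "(w - u) * F u \<le> integral {u..w} F \<and> integral {u..w} F \<le> (w - u) * F w" if "u \<le> w" for u w
  proof
    have "integral {u..w} (\<lambda>x. F u) \<le> integral {u..w} F"
      by (rule integral_le) (auto intro: Fint Fmono)
    then show "(w - u) * F u \<le> integral {u..w} F" using that by simp
    have "integral {u..w} F \<le> integral {u..w} (\<lambda>x. F w)"
      by (rule integral_le) (auto intro: Fint Fmono)
    then show "integral {u..w} F \<le> (w - u) * F w" using that by simp
  qed
  have intg: "integrable M (\<lambda>s. indicator A s * s)" if "A \<in> sets borel" for A
  proof (rule Bochner_Integration.integrable_bound)
    show "integrable M (\<lambda>s. \<theta>h)" by simp
    show "(\<lambda>s. indicator A s * s) \<in> borel_measurable M" using that by simp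
    show "AE x in M. norm (indicator A x * x) \<le> norm \<theta>h"
      using AE by eventually_elim (use assms in \<open>auto simp: indicator_def\<close>)
  qed
  define L where "L t = (LINT s:{..t}|M. s)" for t
  have Lint: "L t = integral\<^sup>L M (\<lambda>s. indicator {..t} s * s)" for t
    unfolding L_def set_lebesgue_integral_def by simp
  have Ldiff: "L w - L u = integral\<^sup>L M (\<lambda>s. indicator {u<..w} s * s)" if "u \<le> w" for u w
  proof -
    have "(\<lambda>s. indicator {..w} s * s) = (\<lambda>s. indicator {..u} s * s + indicator {u<..w} s * s)"
      using that by (auto simp: indicator_def fun_eq_iff)
    then have "L w = L u + integral\<^sup>L M (\<lambda>s. indicator {u<..w} s * s)"
      unfolding Lint by (simp add: intg)
    then show ?thesis by simp
  qed
  have Lbnd: "u * (F w - F u) \<le> L w - L u \<and> L w - L u \<le> w * (F w - F u)" if "u < w" for u w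
  proof -
    have m: "F w - F u = measure M {u<..w}" unfolding F_def using cdf_diff_eq[OF that] .
    have i1: "integrable M (\<lambda>s. indicator {u<..w} s * s)" by (rule intg) simp
    have i2: "integrable M (\<lambda>s. indicator {u<..w} s * c)" for c :: real by (intro integrable_mult_left integrable_real_indicator) (auto simp: less_top[symmetric])
    have "integral\<^sup>L M (\<lambda>s. indicator {u<..w} s * u) \<le> integral\<^sup>L M (\<lambda>s. indicator {u<..w} s * s)"
      by (rule integral_mono[OF i2 i1]) (auto simp: indicator_def)
    moreover have "integral\<^sup>L M (\<lambda>s. indicator {u<..w} s * s) \<le> integral\<^sup>L M (\<lambda>s. indicator {u<..w} s * w)"
      by (rule integral_mono[OF i1 i2]) (auto simp: indicator_def)
    ultimately show ?thesis using Ldiff[of u w] that m by (simp add: mult.commute)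
  qed
  define D where "D t = L t - t * F t + integral {\<theta>l..t} F" for t
  have Dstep: "\<bar>D w - D u\<bar> \<le> (w - u) * (F w - F u)" if "\<theta>l \<le> u" "u \<le> w" for u w
  proof (cases "u = w")
    case False
    then have uw: "u < w" using that by simp
    have "D w - D u = (L w - L u) - w * F w + u * F u + integral {u..w} F"
      unfolding D_def using Idiff[OF that] by simp
    then show ?thesis using Lbnd[OF uw] Ibnd[OF that(2)] by (auto simp: algebra_simps abs_le_iff)
  qed simp
  have Dchain: "\<bar>D (a + real k * h) - D a\<bar> \<le> h * (F (a + real k * h) - F a)"
    if "\<theta>l \<le> a" "h > 0" for a h k
  proof (induction k)
    case (Suc k)
    have "\<bar>D (a + real (Suc k) * h) - D (a + real k * h)\<bar> \<le> h * (F (a + real (Suc k) * h) - F (a + real k * h))"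
    proof -
      have "0 \<le> real k * h" using that by simp
      then have "\<theta>l \<le> a + real k * h" "a + real k * h \<le> a + real (Suc k) * h" using that by (linarith, simp add: algebra_simps)
      from Dstep[OF this] show ?thesis by (simp add: algebra_simps)

    qed
    with Suc show ?case unfolding right_diff_distrib abs_le_iff by linarith
  qed simp
  have Dconst: "D b = D a" if "\<theta>l \<le> a" "a < b" for a b
  proof (rule ccontr)
    assume "D b \<noteq> D a"
    then have d: "\<bar>D b - D a\<bar> > 0" by simp
    obtain n :: nat where n: "(b - a) / \<bar>D b - D a\<bar> < real n" using reals_Archimedean2 by blast
    then have npos: "real n > 0" using d that by (smt (verit) divide_pos_pos)
    define h where "h = (b - a) / real n"
    have h: "h > 0" using npos that by (simp add: h_def)
    have "a + real n * h = b" using npos by (simp add: h_def)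
    then have "\<bar>D b - D a\<bar> \<le> h * (F b - F a)" using Dchain[OF that(1) h, of n] by simp
    also have "\<dots> \<le> h" using F01[of b] F01[of a] h by (simp add: mult_left_le)
    also have "h < \<bar>D b - D a\<bar>" using n npos d by (simp add: h_def field_simps)
    finally show False by simp
  qed
  have D0: "D \<theta>l = 0"
  proof -
    have "integral\<^sup>L M (\<lambda>s. indicator {..\<theta>l} s * s) = integral\<^sup>L M (\<lambda>s. indicator {..\<theta>l} s * \<theta>l)"
      by (rule integral_cong_AE) (use AE in \<open>auto simp: indicator_def elim!: eventually_mono\<close>)
    then have "L \<theta>l = \<theta>l * F \<theta>l" unfolding Lint F_def cdf_def2 by (simp add: mult.commute)
    then show ?thesis unfolding D_def by simp
  qed
  show "(LINT s:{..t}|M. s) = t * cdf M t - integral {\<theta>l..t} (cdf M)" if "t \<ge> \<theta>l" for t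
  proof -
    have "D t = 0" using D0 Dconst[of \<theta>l t] that by (cases "t = \<theta>l") auto
    then show ?thesis unfolding D_def L_def F_def by simp
  qed
qed

theorem lemma11:
  fixes M :: "real measure" and \<theta>l \<theta>h \<phi>d \<tau> \<tau>a \<tau>b :: real
  assumes "0 \<le> \<theta>l" and "\<theta>l < \<theta>h"
    and "real_distribution M" and "measure M {\<theta>l..\<theta>h} = 1"
    and "\<phi>d > 0"
    and "measure M {..\<tau>} > 0"
    and "\<tau> - \<phi>d = cond_exp_le M \<tau>"
    and "\<forall>\<tau>'>\<tau>. \<tau>' - \<phi>d \<ge> cond_exp_le M \<tau>'"
    and "\<tau> \<le> \<tau>a" and "\<tau>a \<le> \<tau>b"
  shows "integral {\<theta>l..\<tau>b} (cdf M) \<le> exp ((\<tau>b - \<tau>a) / \<phi>d) * integral {\<theta>l..\<tau>a} (cdf M)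
       \<and> (\<tau>a < \<tau>b \<longrightarrow>
         (integral {\<theta>l..\<tau>b} (cdf M) = exp ((\<tau>b - \<tau>a) / \<phi>d) * integral {\<theta>l..\<tau>a} (cdf M)
          \<longleftrightarrow> (\<forall>\<tau>'\<in>{\<tau>a..\<tau>b}. \<tau>' - \<phi>d = cond_exp_le M \<tau>')))"
proof -
  interpret real_distribution M by fact
  note Lid = setup_facts(1)[OF assms(1-4)]
  note F0 = setup_facts(2)[OF assms(1-4)]
  define F where "F = cdf M"
  define I where "I t = integral {\<theta>l..t} F" for t
  have \<phi>: "\<phi>d > 0" by fact
  have Fmono: "x \<le> y \<Longrightarrow> F x \<le> F y" for x y unfolding F_def by (rule cdf_nondecreasing)
  have F01: "0 \<le> F x" "F x \<le> 1" for x unfolding F_def using cdf_nonneg cdf_bounded_prob by auto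
  have Fint: "F integrable_on {a..b}" for a b
    by (rule integrable_on_mono_on) (auto simp: mono_on_def Fmono)
  have Idiff: "I w - I u = integral {u..w} F" if "\<theta>l \<le> u" "u \<le> w" for u w
    using Henstock_Kurzweil_Integration.integral_combine[OF that Fint[of \<theta>l w]] unfolding I_def by simp
  have Ibnd: "(w - u) * F u \<le> integral {u..w} F \<and> integral {u..w} F \<le> (w - u) * F w" if "u \<le> w" for u w
  proof
    have "integral {u..w} (\<lambda>x. F u) \<le> integral {u..w} F"
      by (rule integral_le) (auto intro: Fint Fmono)
    then show "(w - u) * F u \<le> integral {u..w} F" using that by simp
    have "integral {u..w} F \<le> integral {u..w} (\<lambda>x. F w)"
      by (rule integral_le) (auto intro: Fint Fmono)
    then show "integral {u..w} F \<le> (w - u) * F w" using that by simp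
  qed
  have Inn: "I t \<ge> 0" for t unfolding I_def by (rule integral_nonneg) (auto intro: Fint F01)
  have Fpos\<tau>: "F \<tau> > 0" using assms(6) unfolding F_def cdf_def2 .
  have \<theta>\<tau>: "\<theta>l \<le> \<tau>"
  proof (rule ccontr)
    assume "\<not> \<theta>l \<le> \<tau>" then have "F \<tau> = 0" unfolding F_def by (intro F0) simp
    with Fpos\<tau> show False by simp
  qed
  have Fpos: "F t > 0" if "\<tau> \<le> t" for t using Fmono[OF that] Fpos\<tau> by simp
  have ce: "cond_exp_le M t = t - I t / F t" if "\<tau> \<le> t" for t
  proof -
    have "cond_exp_le M t = (t * F t - I t) / F t"
      unfolding cond_exp_le_def Lid[OF order_trans[OF \<theta>\<tau> that]] I_def F_def cdf_def2 ..
    then show ?thesis using Fpos[OF that] by (simp add: field_simps)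
  qed
  have eqiff: "(t - \<phi>d = cond_exp_le M t) \<longleftrightarrow> F t = I t / \<phi>d" if "\<tau> \<le> t" for t
  proof -
    have "(t - \<phi>d = t - I t / F t) \<longleftrightarrow> \<phi>d * F t = I t" using Fpos[OF that] by (auto simp: field_simps)
    also have "\<dots> \<longleftrightarrow> F t = I t / \<phi>d" using \<phi> by (auto simp: field_simps)
    finally show ?thesis unfolding ce[OF that] .
  qed
  have Fle: "F t \<le> I t / \<phi>d" if "\<tau> \<le> t" for t
  proof (cases "t = \<tau>")
    case True then show ?thesis using eqiff[of \<tau>] assms(7) by simp
  next
    case False
    then have "t > \<tau>" using that by simp
    then have "t - \<phi>d \<ge> t - I t / F t" using assms(8) ce[OF that] by auto
    then have "I t / F t \<ge> \<phi>d" by simp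
    then have "I t \<ge> \<phi>d * F t" using Fpos[OF that] by (simp add: field_simps)
    then show ?thesis using \<phi> by (simp add: field_simps)
  qed
  have Icont: "continuous_on {u..w} I" if "\<theta>l \<le> u" for u w
  proof -
    have "continuous_on {\<theta>l..w} I" unfolding I_def by (rule indefinite_integral_continuous_1[OF Fint])
    then show ?thesis by (rule continuous_on_subset) (use that in auto)
  qed
  have Iint: "I integrable_on {u..w}" if "\<theta>l \<le> u" for u w
    using Icont[OF that] by (rule integrable_continuous_interval)
  (* Gronwall *)
  have G: "I w \<le> I u * exp ((w - u) / \<phi>d)" if uw: "\<tau> \<le> u" "u \<le> w" for u w
  proof -
    have \<theta>u: "\<theta>l \<le> u" using \<theta>\<tau> uw by simp
    define c where "c = I u"
    define J where "J x = integral {u..x} I" for x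
    have Ib: "I x \<le> c + J x / \<phi>d" if "u \<le> x" for x
    proof -
      have "I x - I u = integral {u..x} F" using Idiff[OF \<theta>u that] .
      also have "\<dots> \<le> integral {u..x} (\<lambda>s. (1 / \<phi>d) * I s)"
      proof (rule integral_le[OF Fint])
        show "(\<lambda>s. (1 / \<phi>d) * I s) integrable_on {u..x}"
          using integrable_on_cmult_left[OF Iint[OF \<theta>u], of "1/\<phi>d"] by simp
        show "F s \<le> 1 / \<phi>d * I s" if "s \<in> {u..x}" for s using Fle[of s] that \<open>\<tau> \<le> u\<close> by simp
      qed
      also have "\<dots> = J x / \<phi>d" unfolding J_def using integral_mult[OF Iint[OF \<theta>u], of "1/\<phi>d"] by simp
      finally show ?thesis unfolding c_def by simp
    qed
    define K where "K x = exp (-(x - u) / \<phi>d) * (J x + \<phi>d * c)" for x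
    define K' where "K' x = exp (-(x - u) / \<phi>d) * (I x - J x / \<phi>d - c)" for x
    have Jd: "(J has_real_derivative I x) (at x within {u..w})" if "x \<in> {u..w}" for x
      unfolding J_def by (rule integral_has_real_derivative[OF Icont[OF \<theta>u] that])
    have Kd: "(K has_derivative (*) (K' x)) (at x within {u..w})" if "u \<le> x" "x \<le> w" for x
    proof -
      have "(K has_real_derivative
          (exp (-(x - u) / \<phi>d) * (- 1 / \<phi>d)) * (J x + \<phi>d * c) + exp (-(x - u) / \<phi>d) * I x) (at x within {u..w})"
      proof -
        have d1: "((\<lambda>x. exp (-(x - u) / \<phi>d)) has_real_derivative exp (-(x - u) / \<phi>d) * (- 1 / \<phi>d)) (at x within {u..w})"
          by (rule DERIV_chain'[where f="\<lambda>x. -(x - u) / \<phi>d", OF _ DERIV_exp])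
             (use \<phi> in \<open>auto intro!: derivative_eq_intros\<close>)
        have d2: "((\<lambda>x. J x + \<phi>d * c) has_real_derivative I x) (at x within {u..w})"
          using Jd[of x] that by (auto intro!: derivative_eq_intros)
        show ?thesis unfolding K_def using DERIV_mult[OF d1 d2] by (simp add: mult.commute)
      qed
      moreover have "(exp (-(x - u) / \<phi>d) * (- 1 / \<phi>d)) * (J x + \<phi>d * c) + exp (-(x - u) / \<phi>d) * I x = K' x"
        unfolding K'_def using \<phi> by (simp add: field_simps)
      ultimately show ?thesis by (simp add: has_field_derivative_def)
    qed
    obtain \<xi> where \<xi>: "\<xi> \<in> {u..w}" "K w - K u = K' \<xi> * (w - u)"
      using mvt_very_simple[OF uw(2) Kd] by blast
    have "K' \<xi> \<le> 0" unfolding K'_def using Ib[of \<xi>] \<xi>(1)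
      by (intro mult_nonneg_nonpos) auto
    then have "K' \<xi> * (w - u) \<le> 0" using uw by (simp add: mult_nonpos_nonneg)
    then have "K w \<le> K u" using \<xi> by simp
    also have "K u = \<phi>d * c" unfolding K_def J_def by simp
    finally have "exp (-(w - u) / \<phi>d) * (J w + \<phi>d * c) \<le> \<phi>d * c" unfolding K_def .
    then have "exp ((w - u) / \<phi>d) * (exp (-(w - u) / \<phi>d) * (J w + \<phi>d * c)) \<le> exp ((w - u) / \<phi>d) * (\<phi>d * c)"
      by (intro mult_left_mono) auto
    then have "J w + \<phi>d * c \<le> exp ((w - u) / \<phi>d) * (\<phi>d * c)"
      by (simp add: mult.assoc[symmetric] exp_add[symmetric] add_divide_distrib[symmetric])
    then have "J w / \<phi>d + c \<le> exp ((w - u) / \<phi>d) * c" using \<phi> by (simp add: field_simps)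
    then show ?thesis using Ib[OF uw(2)] unfolding c_def by (simp add: mult.commute)
  qed
  have part1: "I \<tau>b \<le> exp ((\<tau>b - \<tau>a) / \<phi>d) * I \<tau>a"
    using G[OF assms(9,10)] by (simp add: mult.commute)
  have II: "integral {\<theta>l..t} (cdf M) = I t" for t by (simp add: I_def F_def)
  show ?thesis unfolding II
  proof (intro conjI impI)
    show "I \<tau>b \<le> exp ((\<tau>b - \<tau>a) / \<phi>d) * I \<tau>a" by (rule part1)
    assume ab: "\<tau>a < \<tau>b"
    have \<theta>a: "\<theta>l \<le> \<tau>a" using \<theta>\<tau> assms(9) by simp
    show "I \<tau>b = exp ((\<tau>b - \<tau>a) / \<phi>d) * I \<tau>a \<longleftrightarrow> (\<forall>\<tau>'\<in>{\<tau>a..\<tau>b}. \<tau>' - \<phi>d = cond_exp_le M \<tau>')"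
    proof
      assume eq: "I \<tau>b = exp ((\<tau>b - \<tau>a) / \<phi>d) * I \<tau>a"
      have Ieq: "I t = I \<tau>a * exp ((t - \<tau>a) / \<phi>d)" if "t \<in> {\<tau>a..\<tau>b}" for t
      proof -
        have 1: "I t \<le> I \<tau>a * exp ((t - \<tau>a) / \<phi>d)" using G[of \<tau>a t] that assms(9) by simp
        have 2: "I \<tau>b \<le> I t * exp ((\<tau>b - t) / \<phi>d)" using G[of t \<tau>b] that assms(9) by simp
        have "exp ((\<tau>b - \<tau>a) / \<phi>d) = exp ((t - \<tau>a) / \<phi>d) * exp ((\<tau>b - t) / \<phi>d)"
          by (simp add: exp_add[symmetric] add_divide_distrib[symmetric])
        then have "(I \<tau>a * exp ((t - \<tau>a) / \<phi>d)) * exp ((\<tau>b - t) / \<phi>d) \<le> I t * exp ((\<tau>b - t) / \<phi>d)"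
          using 2 eq by (simp add: mult_ac)
        then have "I \<tau>a * exp ((t - \<tau>a) / \<phi>d) \<le> I t"
          by (rule mult_right_le_imp_le) simp
        with 1 show ?thesis by simp
      qed
      have key: "I \<tau>a * exp ((u - \<tau>a) / \<phi>d) / \<phi>d \<le> F w" if "\<tau>a \<le> u" "u < w" "w \<le> \<tau>b" for u w
      proof -
        define E where "E = exp ((u - \<tau>a) / \<phi>d)"
        define X where "X = exp ((w - u) / \<phi>d)"
        define P where "P = I \<tau>a * E"
        have P0: "P \<ge> 0" unfolding P_def E_def using Inn by simp
        have X1: "X - 1 \<ge> (w - u) / \<phi>d" unfolding X_def using exp_ge_add_one_self[of "(w - u) / \<phi>d"] by linarith
        have "exp ((w - \<tau>a) / \<phi>d) = E * X" unfolding E_def X_def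
          by (simp add: exp_add[symmetric] add_divide_distrib[symmetric])
        then have "I w - I u = P * (X - 1)"
          using Ieq[of w] Ieq[of u] that unfolding P_def E_def by (simp add: algebra_simps)
        also have "\<dots> \<ge> P * ((w - u) / \<phi>d)" by (rule mult_left_mono[OF X1 P0])
        finally have "P * ((w - u) / \<phi>d) \<le> (w - u) * F w"
          using Idiff[of u w] Ibnd[of u w] that \<theta>a by simp
        then have "(w - u) * (P / \<phi>d) \<le> (w - u) * F w" by (simp add: mult_ac)
        then have "P / \<phi>d \<le> F w" by (rule mult_left_le_imp_le[of "w - u"]) (use that in simp)
        then show ?thesis unfolding P_def E_def .
      qed
      show "\<forall>\<tau>'\<in>{\<tau>a..\<tau>b}. \<tau>' - \<phi>d = cond_exp_le M \<tau>'"
      proof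
        fix t assume t: "t \<in> {\<tau>a..\<tau>b}"
        have \<tau>t: "\<tau> \<le> t" using t assms(9) by simp
        have "I t / \<phi>d \<le> F t"
        proof (cases "t < \<tau>b")
          case True
          have lim: "(F \<longlongrightarrow> F t) (at_right t)"
            using cdf_is_right_cont[of t] unfolding F_def continuous_within .
          show ?thesis
          proof (rule tendsto_lowerbound[OF lim])
            show "\<forall>\<^sub>F w in at_right t. I t / \<phi>d \<le> F w"
              using eventually_at_right_real[OF True]
            proof (rule eventually_mono)
              fix w assume "w \<in> {t<..<\<tau>b}"
              then show "I t / \<phi>d \<le> F w" using key[of t w] Ieq[OF t] t by simp
            qed
          qed simp
        next
          case False
          then have tb: "t = \<tau>b" using t by simp
          have lim: "((\<lambda>u. I \<tau>a * exp ((u - \<tau>a) / \<phi>d) / \<phi>d) \<longlongrightarrow> I \<tau>a * exp ((\<tau>b - \<tau>a) / \<phi>d) / \<phi>d) (at_left \<tau>b)"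
            by (intro tendsto_intros) (use \<phi> in simp_all)
          have "I \<tau>a * exp ((\<tau>b - \<tau>a) / \<phi>d) / \<phi>d \<le> F \<tau>b"
          proof (rule tendsto_upperbound[OF lim])
            show "\<forall>\<^sub>F u in at_left \<tau>b. I \<tau>a * exp ((u - \<tau>a) / \<phi>d) / \<phi>d \<le> F \<tau>b"
              using eventually_at_left_real[OF ab]
            proof (rule eventually_mono)
              fix u assume "u \<in> {\<tau>a<..<\<tau>b}"
              then show "I \<tau>a * exp ((u - \<tau>a) / \<phi>d) / \<phi>d \<le> F \<tau>b" using key[of u \<tau>b] by simp
            qed
          qed simp
          then show ?thesis using tb eq by (simp add: mult.commute)
        qed
        then have "F t = I t / \<phi>d" using Fle[OF \<tau>t] by simp
        then show "t - \<phi>d = cond_exp_le M t" using eqiff[OF \<tau>t] by simp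
      qed
    next
      assume all: "\<forall>\<tau>'\<in>{\<tau>a..\<tau>b}. \<tau>' - \<phi>d = cond_exp_le M \<tau>'"
      have Fe: "F t = I t / \<phi>d" if "t \<in> {\<tau>a..\<tau>b}" for t
        using all that eqiff[of t] assms(9) by auto
      define Q where "Q x = integral {\<tau>a..x} (\<lambda>s. (1 / \<phi>d) * I s)" for x
      have Irep: "I x = I \<tau>a + Q x" if "x \<in> {\<tau>a..\<tau>b}" for x
      proof -
        have "I x - I \<tau>a = integral {\<tau>a..x} F" using Idiff[OF \<theta>a] that by simp
        also have "\<dots> = Q x" unfolding Q_def by (rule integral_cong) (use Fe that in auto)
        finally show ?thesis by simp
      qed
      have cQ: "continuous_on {\<tau>a..\<tau>b} (\<lambda>s. (1 / \<phi>d) * I s)"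
        by (intro continuous_intros Icont[OF \<theta>a])
      define P where "P x = exp (-(x - \<tau>a) / \<phi>d) * (I \<tau>a + Q x)" for x
      define P' where "P' x = exp (-(x - \<tau>a) / \<phi>d) * (- 1 / \<phi>d) * (I \<tau>a + Q x) + exp (-(x - \<tau>a) / \<phi>d) * ((1 / \<phi>d) * I x)" for x
      have Pd: "(P has_derivative (*) (P' x)) (at x within {\<tau>a..\<tau>b})" if "\<tau>a \<le> x" "x \<le> \<tau>b" for x
      proof -
        have d1: "((\<lambda>x. exp (-(x - \<tau>a) / \<phi>d)) has_real_derivative exp (-(x - \<tau>a) / \<phi>d) * (- 1 / \<phi>d)) (at x within {\<tau>a..\<tau>b})"
          by (rule DERIV_chain'[where f="\<lambda>x. -(x - \<tau>a) / \<phi>d", OF _ DERIV_exp])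
             (use \<phi> in \<open>auto intro!: derivative_eq_intros\<close>)
        have d2: "((\<lambda>x. I \<tau>a + Q x) has_real_derivative (1 / \<phi>d) * I x) (at x within {\<tau>a..\<tau>b})"
        proof -
          have "(Q has_real_derivative (1 / \<phi>d) * I x) (at x within {\<tau>a..\<tau>b})"
            unfolding Q_def by (rule integral_has_real_derivative[OF cQ]) (use that in auto)
          from DERIV_add[OF DERIV_const this] show ?thesis by simp
        qed
        show ?thesis unfolding P_def P'_def using DERIV_mult[OF d1 d2] by (simp add: has_field_derivative_def mult_ac)
      qed
      obtain \<xi> where \<xi>: "\<xi> \<in> {\<tau>a..\<tau>b}" "P \<tau>b - P \<tau>a = P' \<xi> * (\<tau>b - \<tau>a)"
        using mvt_very_simple[OF assms(10) Pd] by blast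
      have "P' \<xi> = 0" unfolding P'_def using Irep[OF \<xi>(1)] \<phi> by (simp add: field_simps)
      then have "P \<tau>b = P \<tau>a" using \<xi> by simp
      moreover have "P \<tau>a = I \<tau>a" unfolding P_def Q_def by simp
      moreover have "P \<tau>b = exp (-(\<tau>b - \<tau>a) / \<phi>d) * I \<tau>b" unfolding P_def using Irep[of \<tau>b] assms(10) by simp
      ultimately have "exp (-(\<tau>b - \<tau>a) / \<phi>d) * I \<tau>b = I \<tau>a" by simp
      then have "exp ((\<tau>b - \<tau>a) / \<phi>d) * (exp (-(\<tau>b - \<tau>a) / \<phi>d) * I \<tau>b) = exp ((\<tau>b - \<tau>a) / \<phi>d) * I \<tau>a" by simp
      then show "I \<tau>b = exp ((\<tau>b - \<tau>a) / \<phi>d) * I \<tau>a"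
        by (simp add: mult.assoc[symmetric] exp_add[symmetric] add_divide_distrib[symmetric])
    qed
  qed
qed

end
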